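(* Let $\mathbf{k}$ be an algebraically closed field of characteristic zero and let $\mathbb{H}_4$ be Sweedler's 4-dimensional Hopf algebra, with basis $\{1,g,\nu,g\nu\}$. Then every relaxed weak post-Hopf algebra structure $\rhd$ on $\mathbb{H}_4$ has one of the following forms (in each case $x\rhd 1=\varepsilon(x)1$, i.e. $1\rhd 1=g\rhd 1=1$ and $\nu\rhd 1=g\nu\rhd 1=0$; the remaining values are listed): (i) for some parameter $a\in\mathbf{k}$: $1\rhd g=g$, $1\rhd\nu=\nu$, $1\rhd g\nu=g\nu$; $g\rhd g=g$, $g\rhd\nu=-\nu$, $g\rhd g\nu=-g\nu$; $\nu\rhd g=0$, $\nu\rhd\nu=a\nu$, $\nu\rhd g\nu=ag\nu$; $g\nu\rhd g=0$, $g\nu\rhd\nu=a\nu$, $g\nu\rhd g\nu=ag\nu$. (ii) for some parameter $a\in\mathbf{k}$: $1\rhd g=g$, $1\rhd\nu=\nu$, $1\rhd g\nu=g\nu$; $g\rhd g=1$, $g\rhd\nu=0$, $g\rhd g\nu=0$; $\nu\rhd g=a1-ag$, $\nu\rhd\nu=-a\nu$, $\nu\rhd g\nu=-ag\nu$; $g\nu\rhd g=a1-ag$, $g\nu\rhd\nu=-a\nu$, $g\nu\rhd g\nu=-ag\nu$. (iii) $1\rhd g=g$, $1\rhd\nu=\nu$, $1\rhd g\nu=g\nu$; $g\rhd g=g$, $g\rhd\nu=\nu$, $g\rhd g\nu=g\nu$; and $\nu\rhd y=g\nu\rhd y=0$ for $y\in\{g,\nu,g\nu\}$. (iv) $1\rhd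 g=g$, $g\rhd g=g$, and $x\rhd y=0$ for all $x\in\{1,g,\nu,g\nu\}$, $y\in\{\nu,g\nu\}$, and $\nu\rhd g=g\nu\rhd g=0$. (v) $1\rhd g=g$, $g\rhd g=1$, and $x\rhd y=0$ for all $x\in\{1,g,\nu,g\nu\}$, $y\in\{\nu,g\nu\}$, and $\nu\rhd g=g\nu\rhd g=0$. (vi) $1\rhd g=1$, $g\rhd g=1$, and $x\rhd y=0$ for all $x\in\{1,g,\nu,g\nu\}$, $y\in\{\nu,g\nu\}$, and $\nu\rhd g=g\nu\rhd g=0$.
   Context: Sweedler's 4-dimensional Hopf algebra $\mathbb{H}_4$ is the algebra generated by $g,\nu$ with relations $g^2=1$, $\nu^2=0$, $g\nu+\nu g=0$, with coproduct $\Delta(g)=g\otimes g$, $\Delta(\nu)=g\otimes\nu+\nu\otimes 1$, counit $\varepsilon(g)=1$, $\varepsilon(\nu)=0$, antipode $S(g)=g$, $S(\nu)=-g\nu$. Sweedler notation $\Delta(x)=x_1\otimes x_2$ is used with summation suppressed. A relaxed weak post-Hopf algebra structure on a Hopf algebra $H$ is a linear map $\rhd:H\otimes H\to H$ which is a coalgebra homomorphism, where $H\otimes H$ carries the tensor product coalgebra structure (i.e. $\Delta(x\rhd y)=(x_1\rhd y_1)\otimes(x_2\rhd y_2)$ and $\varepsilon(x\rhd y)=\varepsilon(x)\varepsilon(y)$), satisfying for all $x,y,z\in H$: (1) $x\rhd(yz)=(x_1\rhd y)(x_2\rhd z)$; (2) $x\rhd(y\rhd z)=\big(x_1(x_2\rhd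 y)\big)\rhd z$. (No condition $1\rhd x=x$ is imposed.) The map $\rhd$ is determined by its values $x\rhd y$ on basis elements $x,y\in\{1,g,\nu,g\nu\}$, extended bilinearly. *)

theory Defs
  imports "HOL-Computational_Algebra.Polynomial" "HOL-Library.Function_Algebras"
begin

text \<open>Sweedler's 4-dimensional Hopf algebra H4 over a field 'k, realised as
  coordinate vectors w.r.t. the basis {1, g, nu, g nu}.\<close>

datatype B = One | G | N | GN

lemma UNIV_B: "(UNIV :: B set) = {One, G, N, GN}"
  by (auto intro: B.exhaust)

instance B :: finite
  by standard (simp add: UNIV_B)

type_synonym 'k h4 = "B \<Rightarrow> 'k"
type_synonym 'k h4t = "B \<times> B \<Rightarrow> 'k"

definition vec :: "'k \<Rightarrow> 'k \<Rightarrow> 'k \<Rightarrow> 'k \<Rightarrow> 'k h4" where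
  "vec c1 cg cn cgn = (\<lambda>b. case b of One \<Rightarrow> c1 | G \<Rightarrow> cg | N \<Rightarrow> cn | GN \<Rightarrow> cgn)"

definition bas :: "B \<Rightarrow> 'k::zero_neq_one h4" where
  "bas a = (\<lambda>b. if b = a then 1 else 0)"

text \<open>products of basis elements: g^2 = 1, nu^2 = 0, g nu = - nu g\<close>
fun bmul :: "B \<Rightarrow> B \<Rightarrow> 'k::comm_ring_1 h4" where
  "bmul One b = bas b"
| "bmul a One = bas a"
| "bmul G G = bas One"
| "bmul G N = bas GN"
| "bmul G GN = bas N"
| "bmul N G = - bas GN"
| "bmul N N = 0"
| "bmul N GN = 0"
| "bmul GN G = - bas N"
| "bmul GN N = 0"
| "bmul GN GN = 0"

definition mult :: "'k::comm_ring_1 h4 \<Rightarrow> 'k h4 \<Rightarrow> 'k h4" where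
  "mult u v = (\<lambda>c. \<Sum>a\<in>UNIV. \<Sum>b\<in>UNIV. u a * v b * bmul a b c)"

text \<open>coproduct on basis: Delta 1 = 1@1, Delta g = g@g, Delta nu = g@nu + nu@1,
  Delta(g nu) = 1@g nu + g nu@g\<close>
fun bcop :: "B \<Rightarrow> 'k::comm_ring_1 h4t" where
  "bcop One = (\<lambda>p. if p = (One, One) then 1 else 0)"
| "bcop G = (\<lambda>p. if p = (G, G) then 1 else 0)"
| "bcop N = (\<lambda>p. if p = (G, N) \<or> p = (N, One) then 1 else 0)"
| "bcop GN = (\<lambda>p. if p = (One, GN) \<or> p = (GN, G) then 1 else 0)"

definition cop :: "'k::comm_ring_1 h4 \<Rightarrow> 'k h4t" where
  "cop u = (\<lambda>p. \<Sum>c\<in>UNIV. u c * bcop c p)"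

fun beps :: "B \<Rightarrow> 'k::comm_ring_1" where
  "beps One = 1" | "beps G = 1" | "beps N = 0" | "beps GN = 0"

definition eps :: "'k::comm_ring_1 h4 \<Rightarrow> 'k" where
  "eps u = (\<Sum>c\<in>UNIV. u c * beps c)"

text \<open>A linear map H4 (x) H4 -> H4 is given by its values T a b = e_a |> e_b
  on basis tensors; rhd T extends it bilinearly.\<close>
definition rhd :: "(B \<Rightarrow> B \<Rightarrow> 'k::comm_ring_1 h4) \<Rightarrow> 'k h4 \<Rightarrow> 'k h4 \<Rightarrow> 'k h4" where
  "rhd T u v = (\<lambda>c. \<Sum>a\<in>UNIV. \<Sum>b\<in>UNIV. u a * v b * T a b c)"

definition relaxed_weak_post_hopf :: "(B \<Rightarrow> B \<Rightarrow> 'k::comm_ring_1 h4) \<Rightarrow> bool" where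
  "relaxed_weak_post_hopf T \<longleftrightarrow>
     \<comment> \<open>coalgebra homomorphism H (x) H -> H\<close>
     (\<forall>x y. cop (rhd T x y) =
        (\<lambda>(p, q). \<Sum>a\<in>UNIV. \<Sum>b\<in>UNIV. \<Sum>c\<in>UNIV. \<Sum>d\<in>UNIV.
            cop x (a, b) * cop y (c, d) * rhd T (bas a) (bas c) p * rhd T (bas b) (bas d) q)) \<and>
     (\<forall>x y. eps (rhd T x y) = eps x * eps y) \<and>
     \<comment> \<open>(1) x |> (yz) = (x1 |> y)(x2 |> z)\<close>
     (\<forall>x y z. rhd T x (mult y z) =
        (\<lambda>r. \<Sum>a\<in>UNIV. \<Sum>b\<in>UNIV. cop x (a, b) * mult (rhd T (bas a) y) (rhd T (bas b) z) r)) \<and>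
     \<comment> \<open>(2) x |> (y |> z) = (x1 (x2 |> y)) |> z\<close>
     (\<forall>x y z. rhd T x (rhd T y z) =
        (\<lambda>r. \<Sum>a\<in>UNIV. \<Sum>b\<in>UNIV. cop x (a, b) * rhd T (mult (bas a) (rhd T (bas b) y)) z r))"

fun form_i :: "'k::comm_ring_1 \<Rightarrow> B \<Rightarrow> B \<Rightarrow> 'k h4" where
  "form_i a x One = (if x = One \<or> x = G then bas One else 0)"
| "form_i a One y = bas y"
| "form_i a G G = bas G"
| "form_i a G N = - bas N"
| "form_i a G GN = - bas GN"
| "form_i a N G = 0"
| "form_i a N N = vec 0 0 a 0"
| "form_i a N GN = vec 0 0 0 a"
| "form_i a GN G = 0"
| "form_i a GN N = vec 0 0 a 0"
| "form_i a GN GN = vec 0 0 0 a"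

fun form_ii :: "'k::comm_ring_1 \<Rightarrow> B \<Rightarrow> B \<Rightarrow> 'k h4" where
  "form_ii a x One = (if x = One \<or> x = G then bas One else 0)"
| "form_ii a One y = bas y"
| "form_ii a G G = bas One"
| "form_ii a G N = 0"
| "form_ii a G GN = 0"
| "form_ii a N G = vec a (- a) 0 0"
| "form_ii a N N = vec 0 0 (- a) 0"
| "form_ii a N GN = vec 0 0 0 (- a)"
| "form_ii a GN G = vec a (- a) 0 0"
| "form_ii a GN N = vec 0 0 (- a) 0"
| "form_ii a GN GN = vec 0 0 0 (- a)"

fun form_iii :: "B \<Rightarrow> B \<Rightarrow> 'k::comm_ring_1 h4" where
  "form_iii x One = (if x = One \<or> x = G then bas One else 0)"
| "form_iii One y = bas y"
| "form_iii G y = bas y"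
| "form_iii N y = 0"
| "form_iii GN y = 0"

fun form_iv :: "B \<Rightarrow> B \<Rightarrow> 'k::comm_ring_1 h4" where
  "form_iv x One = (if x = One \<or> x = G then bas One else 0)"
| "form_iv One G = bas G"
| "form_iv G G = bas G"
| "form_iv x y = 0"

fun form_v :: "B \<Rightarrow> B \<Rightarrow> 'k::comm_ring_1 h4" where
  "form_v x One = (if x = One \<or> x = G then bas One else 0)"
| "form_v One G = bas G"
| "form_v G G = bas One"
| "form_v x y = 0"

fun form_vi :: "B \<Rightarrow> B \<Rightarrow> 'k::comm_ring_1 h4" where
  "form_vi x One = (if x = One \<or> x = G then bas One else 0)"
| "form_vi One G = bas One"
| "form_vi G G = bas One"
| "form_vi x y = 0"

end

theory Submission
  imports Defs
begin


lemma sumB: "(\<Sum>x\<in>UNIV. f x) = f One + f G + f N + f GN"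
  by (simp add: UNIV_B add.assoc)

lemma rhd_bas: "rhd T (bas a) (bas b) = T a b"
  by (rule ext) (cases a; cases b; simp add: rhd_def bas_def sumB)

lemma cop_bas: "cop (bas a) = (bcop a :: 'k::comm_ring_1 h4t)"
  by (rule ext) (cases a; simp add: cop_def bas_def sumB)

lemma eps_bas: "eps (bas a :: 'k::comm_ring_1 h4) = beps a"
  by (cases a; simp add: eps_def bas_def sumB)

lemma mult_bas: "mult (bas a) (bas b) = (bmul a b :: 'k::comm_ring_1 h4)"
  by (rule ext) (cases a; cases b; simp add: mult_def bas_def sumB)

lemma rhd_bas1: "rhd T (bas a) v = (\<lambda>c. \<Sum>b\<in>UNIV. v b * T a b c)"
  by (rule ext) (cases a; simp add: rhd_def bas_def sumB)

lemma mult_bas1: "mult (bas a) v = (\<lambda>c. \<Sum>b\<in>UNIV. v b * (bmul a b c :: 'k::comm_ring_1))"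
  by (rule ext) (cases a; simp add: mult_def bas_def sumB)

lemma mult_bas2: "mult u (bas b) = (\<lambda>c. \<Sum>a\<in>UNIV. u a * (bmul a b c :: 'k::comm_ring_1))"
  by (rule ext) (cases b; simp add: mult_def bas_def sumB)

lemma rhd_bas2: "rhd T u (bas b) = (\<lambda>c. \<Sum>a\<in>UNIV. u a * T a b c)"
  by (rule ext) (cases b; simp add: rhd_def bas_def sumB)

context
  fixes T :: "B \<Rightarrow> B \<Rightarrow> 'k::comm_ring_1 h4"
  assumes H: "relaxed_weak_post_hopf T"
begin

lemma E_cop: "cop (T a c) (p, q) =
   (\<Sum>a1\<in>UNIV. \<Sum>a2\<in>UNIV. \<Sum>c1\<in>UNIV. \<Sum>c2\<in>UNIV.
      bcop a (a1, a2) * bcop c (c1, c2) * T a1 c1 p * T a2 c2 q)"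
proof -
  have "cop (rhd T (bas a) (bas c)) (p, q) = (\<lambda>(p, q). \<Sum>a1\<in>UNIV. \<Sum>a2\<in>UNIV. \<Sum>c1\<in>UNIV. \<Sum>c2\<in>UNIV.
            cop (bas a) (a1, a2) * cop (bas c) (c1, c2) * rhd T (bas a1) (bas c1) p * rhd T (bas a2) (bas c2) q) (p, q)"
    using H unfolding relaxed_weak_post_hopf_def by metis
  then show ?thesis by (simp add: rhd_bas cop_bas)
qed

lemma E_eps: "eps (T a c) = beps a * beps c"
  using H unfolding relaxed_weak_post_hopf_def by (metis rhd_bas eps_bas)

lemma E_m: "(\<Sum>d\<in>UNIV. bmul b c d * T a d r) =
   (\<Sum>a1\<in>UNIV. \<Sum>a2\<in>UNIV. bcop a (a1, a2) * mult (T a1 b) (T a2 c) r)"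
proof -
  have "rhd T (bas a) (mult (bas b) (bas c)) r =
        (\<Sum>a1\<in>UNIV. \<Sum>a2\<in>UNIV. cop (bas a) (a1, a2) * mult (rhd T (bas a1) (bas b)) (rhd T (bas a2) (bas c)) r)"
    using H unfolding relaxed_weak_post_hopf_def by metis
  then show ?thesis by (simp only: rhd_bas cop_bas mult_bas) (simp add: rhd_bas1 mult.commute)
qed

lemma E_a: "(\<Sum>d\<in>UNIV. T b c d * T a d r) =
   (\<Sum>a1\<in>UNIV. \<Sum>a2\<in>UNIV. bcop a (a1, a2) * (\<Sum>e\<in>UNIV. mult (bas a1) (T a2 b) e * T e c r))"
proof -
  have "rhd T (bas a) (rhd T (bas b) (bas c)) r =
        (\<Sum>a1\<in>UNIV. \<Sum>a2\<in>UNIV. cop (bas a) (a1, a2) * rhd T (mult (bas a1) (rhd T (bas a2) (bas b))) (bas c) r)"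
    using H unfolding relaxed_weak_post_hopf_def by metis
  then show ?thesis by (simp only: rhd_bas cop_bas) (simp add: rhd_bas1 rhd_bas2)
qed

end

theorem theorem1:
  fixes T :: "B \<Rightarrow> B \<Rightarrow> 'k::{alg_closed_field, field_char_0} h4"
  assumes "relaxed_weak_post_hopf T"
  shows "(\<exists>a. T = form_i a) \<or> (\<exists>a. T = form_ii a) \<or> T = form_iii \<or>
         T = form_iv \<or> T = form_v \<or> T = form_vi"
proof -
  have e0: "((T One N One) + (T One N G)) = 0" using E_eps[OF assms, where a=One and c=N] by (simp add: sumB mult_def bas_def eps_def cop_def; algebra)
  have e1: "((T One GN One) + (T One GN G)) = 0" using E_eps[OF assms, where a=One and c=GN] by (simp add: sumB mult_def bas_def eps_def cop_def; algebra)
  have e2: "((T G N One) + (T G N G)) = 0" using E_eps[OF assms, where a=G and c=N] by (simp add: sumB mult_def bas_def eps_def cop_def; algebra)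
  have e3: "((T G GN One) + (T G GN G)) = 0" using E_eps[OF assms, where a=G and c=GN] by (simp add: sumB mult_def bas_def eps_def cop_def; algebra)
  have e4: "((T N One One) + (T N One G)) = 0" using E_eps[OF assms, where a=N and c=One] by (simp add: sumB mult_def bas_def eps_def cop_def; algebra)
  have e5: "((T N G One) + (T N G G)) = 0" using E_eps[OF assms, where a=N and c=G] by (simp add: sumB mult_def bas_def eps_def cop_def; algebra)
  have e6: "((T N N One) + (T N N G)) = 0" using E_eps[OF assms, where a=N and c=N] by (simp add: sumB mult_def bas_def eps_def cop_def; algebra)
  have e7: "((T N GN One) + (T N GN G)) = 0" using E_eps[OF assms, where a=N and c=GN] by (simp add: sumB mult_def bas_def eps_def cop_def; algebra)
  have e8: "((T GN One One) + (T GN One G)) = 0" using E_eps[OF assms, where a=GN and c=One] by (simp add: sumB mult_def bas_def eps_def cop_def; algebra)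
  have e9: "((T GN G One) + (T GN G G)) = 0" using E_eps[OF assms, where a=GN and c=G] by (simp add: sumB mult_def bas_def eps_def cop_def; algebra)
  have e10: "((T GN N One) + (T GN N G)) = 0" using E_eps[OF assms, where a=GN and c=N] by (simp add: sumB mult_def bas_def eps_def cop_def; algebra)
  have e11: "((T GN GN One) + (T GN GN G)) = 0" using E_eps[OF assms, where a=GN and c=GN] by (simp add: sumB mult_def bas_def eps_def cop_def; algebra)
  have e12: "((T One One G) - 2 * (T One G One) * (T One G G)) = 0" using E_m[OF assms, where a=One and b=G and c=G and r=G] by (simp add: sumB mult_def bas_def eps_def cop_def; algebra)
  have e13: "((T One One N) - 2 * (T One G One) * (T One G N)) = 0" using E_m[OF assms, where a=One and b=G and c=G and r=N] by (simp add: sumB mult_def bas_def eps_def cop_def; algebra)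
  have e14: "((T One One GN) - 2 * (T One G One) * (T One G GN)) = 0" using E_m[OF assms, where a=One and b=G and c=G and r=GN] by (simp add: sumB mult_def bas_def eps_def cop_def; algebra)
  have e15: "((T G One G) - 2 * (T G G One) * (T G G G)) = 0" using E_m[OF assms, where a=G and b=G and c=G and r=G] by (simp add: sumB mult_def bas_def eps_def cop_def; algebra)
  have e16: "((T G One N) - 2 * (T G G One) * (T G G N)) = 0" using E_m[OF assms, where a=G and b=G and c=G and r=N] by (simp add: sumB mult_def bas_def eps_def cop_def; algebra)
  have e17: "((T G One GN) - 2 * (T G G One) * (T G G GN)) = 0" using E_m[OF assms, where a=G and b=G and c=G and r=GN] by (simp add: sumB mult_def bas_def eps_def cop_def; algebra)
  have e18: "(-1 + (T One One One) + (T One One G)) = 0" using E_eps[OF assms, where a=One and c=One] by (simp add: sumB mult_def bas_def eps_def cop_def; algebra)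
  have e19: "(-1 + (T One G One) + (T One G G)) = 0" using E_eps[OF assms, where a=One and c=G] by (simp add: sumB mult_def bas_def eps_def cop_def; algebra)
  have e20: "(-1 + (T G One One) + (T G One G)) = 0" using E_eps[OF assms, where a=G and c=One] by (simp add: sumB mult_def bas_def eps_def cop_def; algebra)
  have e21: "(-1 + (T G G One) + (T G G G)) = 0" using E_eps[OF assms, where a=G and c=G] by (simp add: sumB mult_def bas_def eps_def cop_def; algebra)
  have e22: "(-(T One G One) * (T One N One) - (T One G G) * (T One N G) + (T One GN One)) = 0" using E_m[OF assms, where a=One and b=G and c=N and r=One] by (simp add: sumB mult_def bas_def eps_def cop_def; algebra)
  have e23: "(-(T G G One) * (T G N One) - (T G G G) * (T G N G) + (T G GN One)) = 0" using E_m[OF assms, where a=G and b=G and c=N and r=One] by (simp add: sumB mult_def bas_def eps_def cop_def; algebra)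
  have e24: "(-(T One G One) * (T N G One) - (T One G G) * (T N G G) - (T G G One) * (T N G One) - (T G G G) * (T N G G) + (T N One One)) = 0" using E_m[OF assms, where a=N and b=G and c=G and r=One] by (simp add: sumB mult_def bas_def eps_def cop_def; algebra)
  have e25: "(-(T One N One) * (T N G One) - (T One N G) * (T N G G) - (T G G One) * (T N N One) - (T G G G) * (T N N G) + (T N GN One)) = 0" using E_m[OF assms, where a=N and b=G and c=N and r=One] by (simp add: sumB mult_def bas_def eps_def cop_def; algebra)
  have e26: "(-(T One G One) * (T GN G One) - (T One G G) * (T GN G G) - (T G G One) * (T GN G One) - (T G G G) * (T GN G G) + (T GN One One)) = 0" using E_m[OF assms, where a=GN and b=G and c=G and r=One] by (simp add: sumB mult_def bas_def eps_def cop_def; algebra)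
  have e27: "(-(T One G One) * (T GN N One) - (T One G G) * (T GN N G) - (T G N One) * (T GN G One) - (T G N G) * (T GN G G) + (T GN GN One)) = 0" using E_m[OF assms, where a=GN and b=G and c=N and r=One] by (simp add: sumB mult_def bas_def eps_def cop_def; algebra)
  have e28: "(-(T One G One) * (T One N N) - (T One G G) * (T One N GN) - (T One G N) * (T One N One) + (T One G GN) * (T One N G) + (T One GN N)) = 0" using E_m[OF assms, where a=One and b=G and c=N and r=N] by (simp add: sumB mult_def bas_def eps_def cop_def; algebra)
  have e29: "(-(T One G One) * (T One N GN) - (T One G G) * (T One N N) + (T One G N) * (T One N G) - (T One G GN) * (T One N One) + (T One GN GN)) = 0" using E_m[OF assms, where a=One and b=G and c=N and r=GN] by (simp add: sumB mult_def bas_def eps_def cop_def; algebra)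
  have e30: "(-(T G G One) * (T G N N) - (T G G G) * (T G N GN) - (T G G N) * (T G N One) + (T G G GN) * (T G N G) + (T G GN N)) = 0" using E_m[OF assms, where a=G and b=G and c=N and r=N] by (simp add: sumB mult_def bas_def eps_def cop_def; algebra)
  have e31: "(-(T G G One) * (T G N GN) - (T G G G) * (T G N N) + (T G G N) * (T G N G) - (T G G GN) * (T G N One) + (T G GN GN)) = 0" using E_m[OF assms, where a=G and b=G and c=N and r=GN] by (simp add: sumB mult_def bas_def eps_def cop_def; algebra)
  have e32: "(-(T One G One) * (T N G N) + (T One G G) * (T N G GN) - (T One G N) * (T N G One) - (T One G GN) * (T N G G) - (T G G One) * (T N G N) - (T G G G) * (T N G GN) - (T G G N) * (T N G One) + (T G G GN) * (T N G G) + (T N One N)) = 0" using E_m[OF assms, where a=N and b=G and c=G and r=N] by (simp add: sumB mult_def bas_def eps_def cop_def; algebra)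
  have e33: "(-(T One G One) * (T N G GN) + (T One G G) * (T N G N) - (T One G N) * (T N G G) - (T One G GN) * (T N G One) - (T G G One) * (T N G GN) - (T G G G) * (T N G N) + (T G G N) * (T N G G) - (T G G GN) * (T N G One) + (T N One GN)) = 0" using E_m[OF assms, where a=N and b=G and c=G and r=GN] by (simp add: sumB mult_def bas_def eps_def cop_def; algebra)
  have e34: "(-(T One N One) * (T N G N) + (T One N G) * (T N G GN) - (T One N N) * (T N G One) - (T One N GN) * (T N G G) - (T G G One) * (T N N N) - (T G G G) * (T N N GN) - (T G G N) * (T N N One) + (T G G GN) * (T N N G) + (T N GN N)) = 0" using E_m[OF assms, where a=N and b=G and c=N and r=N] by (simp add: sumB mult_def bas_def eps_def cop_def; algebra)
  have e35: "(-(T One N One) * (T N G GN) + (T One N G) * (T N G N) - (T One N N) * (T N G G) - (T One N GN) * (T N G One) - (T G G One) * (T N N GN) - (T G G G) * (T N N N) + (T G G N) * (T N N G) - (T G G GN) * (T N N One) + (T N GN GN)) = 0" using E_m[OF assms, where a=N and b=G and c=N and r=GN] by (simp add: sumB mult_def bas_def eps_def cop_def; algebra)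
  have e36: "(-(T One G One) * (T GN G N) - (T One G G) * (T GN G GN) - (T One G N) * (T GN G One) + (T One G GN) * (T GN G G) - (T G G One) * (T GN G N) + (T G G G) * (T GN G GN) - (T G G N) * (T GN G One) - (T G G GN) * (T GN G G) + (T GN One N)) = 0" using E_m[OF assms, where a=GN and b=G and c=G and r=N] by (simp add: sumB mult_def bas_def eps_def cop_def; algebra)
  have e37: "(-(T One G One) * (T GN G GN) - (T One G G) * (T GN G N) + (T One G N) * (T GN G G) - (T One G GN) * (T GN G One) - (T G G One) * (T GN G GN) + (T G G G) * (T GN G N) - (T G G N) * (T GN G G) - (T G G GN) * (T GN G One) + (T GN One GN)) = 0" using E_m[OF assms, where a=GN and b=G and c=G and r=GN] by (simp add: sumB mult_def bas_def eps_def cop_def; algebra)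
  have e38: "(-(T One G One) * (T GN N N) - (T One G G) * (T GN N GN) - (T One G N) * (T GN N One) + (T One G GN) * (T GN N G) - (T G N One) * (T GN G N) + (T G N G) * (T GN G GN) - (T G N N) * (T GN G One) - (T G N GN) * (T GN G G) + (T GN GN N)) = 0" using E_m[OF assms, where a=GN and b=G and c=N and r=N] by (simp add: sumB mult_def bas_def eps_def cop_def; algebra)
  have e39: "(-(T One G One) * (T GN N GN) - (T One G G) * (T GN N N) + (T One G N) * (T GN N G) - (T One G GN) * (T GN N One) - (T G N One) * (T GN G GN) + (T G N G) * (T GN G N) - (T G N N) * (T GN G G) - (T G N GN) * (T GN G One) + (T GN GN GN)) = 0" using E_m[OF assms, where a=GN and b=G and c=N and r=GN] by (simp add: sumB mult_def bas_def eps_def cop_def; algebra)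
  have e40: "(-(T One G N) * (T One G N)) = 0" using E_cop[OF assms, where a=One and c=G and p=N and q=N] by (simp add: sumB mult_def bas_def eps_def cop_def; algebra)
  have e41: "(-(T One G GN) * (T One G GN)) = 0" using E_cop[OF assms, where a=One and c=G and p=GN and q=GN] by (simp add: sumB mult_def bas_def eps_def cop_def; algebra)
  have e42: "(-(T G G N) * (T G G N)) = 0" using E_cop[OF assms, where a=G and c=G and p=N and q=N] by (simp add: sumB mult_def bas_def eps_def cop_def; algebra)
  have e43: "(-(T G G GN) * (T G G GN)) = 0" using E_cop[OF assms, where a=G and c=G and p=GN and q=GN] by (simp add: sumB mult_def bas_def eps_def cop_def; algebra)
  have e44: "(-(T One N One) * (T One N One) - (T One N G) * (T One N G)) = 0" using E_m[OF assms, where a=One and b=N and c=N and r=One] by (simp add: sumB mult_def bas_def eps_def cop_def; algebra)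
  have e45: "(-(T G N One) * (T G N One) - (T G N G) * (T G N G)) = 0" using E_m[OF assms, where a=G and b=N and c=N and r=One] by (simp add: sumB mult_def bas_def eps_def cop_def; algebra)
  have e46: "((T One G One) - (T One G One) * (T One G One)) = 0" using E_cop[OF assms, where a=One and c=G and p=One and q=One] by (simp add: sumB mult_def bas_def eps_def cop_def; algebra)
  have e47: "(-(T One One N) * (T One N One) - (T One G One) * (T One N N)) = 0" using E_cop[OF assms, where a=One and c=N and p=One and q=N] by (simp add: sumB mult_def bas_def eps_def cop_def; algebra)
  have e48: "(-(T One One One) * (T One N GN) - (T One G GN) * (T One N One)) = 0" using E_cop[OF assms, where a=One and c=N and p=GN and q=One] by (simp add: sumB mult_def bas_def eps_def cop_def; algebra)
  have e49: "(-(T One G One) * (T N G GN) - (T G G GN) * (T N G One)) = 0" using E_cop[OF assms, where a=N and c=G and p=GN and q=One] by (simp add: sumB mult_def bas_def eps_def cop_def; algebra)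
  have e50: "(-(T One G One) * (T GN G N) - (T G G N) * (T GN G One)) = 0" using E_cop[OF assms, where a=GN and c=G and p=One and q=N] by (simp add: sumB mult_def bas_def eps_def cop_def; algebra)
  have e51: "(-(T One G One) * (T GN N N) - (T One N One) * (T GN One N) - (T G One N) * (T GN N One) - (T G N N) * (T GN G One)) = 0" using E_cop[OF assms, where a=GN and c=N and p=One and q=N] by (simp add: sumB mult_def bas_def eps_def cop_def; algebra)
  have e52: "(-(T One One One) * (T N N GN) - (T One N One) * (T N G GN) - (T G G GN) * (T N N One) - (T G N GN) * (T N One One)) = 0" using E_cop[OF assms, where a=N and c=N and p=GN and q=One] by (simp add: sumB mult_def bas_def eps_def cop_def; algebra)
  have e53: "((T G G One) - (T G G One) * (T G G One)) = 0" using E_cop[OF assms, where a=G and c=G and p=One and q=One] by (simp add: sumB mult_def bas_def eps_def cop_def; algebra)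
  have e54: "(-(T G One N) * (T G N One) - (T G G One) * (T G N N)) = 0" using E_cop[OF assms, where a=G and c=N and p=One and q=N] by (simp add: sumB mult_def bas_def eps_def cop_def; algebra)
  have e55: "(-(T G One One) * (T G N GN) - (T G G GN) * (T G N One)) = 0" using E_cop[OF assms, where a=G and c=N and p=GN and q=One] by (simp add: sumB mult_def bas_def eps_def cop_def; algebra)
  have e56: "(-(T One One One) * (T N One One) - (T G One One) * (T N One One) + (T N One One)) = 0" using E_cop[OF assms, where a=N and c=One and p=One and q=One] by (simp add: sumB mult_def bas_def eps_def cop_def; algebra)
  have e57: "(-(T One One N) * (T N One One) - (T G One One) * (T N One N)) = 0" using E_cop[OF assms, where a=N and c=One and p=One and q=N] by (simp add: sumB mult_def bas_def eps_def cop_def; algebra)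
  have e58: "(-(T One One One) * (T N N One) - (T One N One) * (T N G One) - (T G G One) * (T N N One) - (T G N One) * (T N One One) + (T N N One)) = 0" using E_cop[OF assms, where a=N and c=N and p=One and q=One] by (simp add: sumB mult_def bas_def eps_def cop_def; algebra)
  have e59: "(-(T One One N) * (T N N One) - (T One N N) * (T N G One) - (T G G One) * (T N N N) - (T G N One) * (T N One N)) = 0" using E_cop[OF assms, where a=N and c=N and p=One and q=N] by (simp add: sumB mult_def bas_def eps_def cop_def; algebra)
  have e60: "(-(T One One One) * (T GN One One) - (T G One One) * (T GN One One) + (T GN One One)) = 0" using E_cop[OF assms, where a=GN and c=One and p=One and q=One] by (simp add: sumB mult_def bas_def eps_def cop_def; algebra)
  have e61: "(-(T One One GN) * (T GN One One) - (T G One One) * (T GN One GN)) = 0" using E_cop[OF assms, where a=GN and c=One and p=GN and q=One] by (simp add: sumB mult_def bas_def eps_def cop_def; algebra)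
  have e62: "(-(T One G One) * (T GN N One) - (T One N One) * (T GN One One) - (T G One One) * (T GN N One) - (T G N One) * (T GN G One) + (T GN N One)) = 0" using E_cop[OF assms, where a=GN and c=N and p=One and q=One] by (simp add: sumB mult_def bas_def eps_def cop_def; algebra)
  have e63: "(-(T One G GN) * (T GN N One) - (T One N GN) * (T GN One One) - (T G One One) * (T GN N GN) - (T G N One) * (T GN G GN)) = 0" using E_cop[OF assms, where a=GN and c=N and p=GN and q=One] by (simp add: sumB mult_def bas_def eps_def cop_def; algebra)
  have e64: "((T One G One) * (T G One One) - (T One G One) * (T G One G) + (T One G G) * (T G G One) + (T One G N) * (T G N One) + (T One G GN) * (T G GN One) - (T G One One) * (T G G One) - (T G One N) * (T GN G One) - (T G One GN) * (T N G One)) = 0" using E_a[OF assms, where a=G and b=One and c=G and r=One] by (simp add: sumB mult_def bas_def eps_def cop_def; algebra)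
  have e65: "(-(T One One GN) * (T One N One) - (T One G One) * (T One N GN) + (T One N GN)) = 0" using E_cop[OF assms, where a=One and c=N and p=One and q=GN] by (simp add: sumB mult_def bas_def eps_def cop_def; algebra)
  have e66: "(-(T One G One) * (T N G N) - (T G G N) * (T N G One) + (T N G N)) = 0" using E_cop[OF assms, where a=N and c=G and p=N and q=One] by (simp add: sumB mult_def bas_def eps_def cop_def; algebra)
  have e67: "(-(T One G One) * (T GN G GN) - (T G G GN) * (T GN G One) + (T GN G GN)) = 0" using E_cop[OF assms, where a=GN and c=G and p=One and q=GN] by (simp add: sumB mult_def bas_def eps_def cop_def; algebra)
  have e68: "(-(T One G One) * (T GN N GN) - (T One N One) * (T GN One GN) - (T G One GN) * (T GN N One) - (T G N GN) * (T GN G One) + (T GN N GN)) = 0" using E_cop[OF assms, where a=GN and c=N and p=One and q=GN] by (simp add: sumB mult_def bas_def eps_def cop_def; algebra)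
  have e69: "(-(T One G One) * (T N G One) - (T One G One) * (T N G G) + (T One G G) * (T GN G One) + (T G G One) * (T N One One) - (T G G One) * (T N G One) + (T G G G) * (T N G One) + (T G G N) * (T N N One) + (T G G GN) * (T N GN One) - (T N G One) * (T N G GN) - (T N G N) * (T GN G One)) = 0" using E_a[OF assms, where a=N and b=G and c=G and r=One] by (simp add: sumB mult_def bas_def eps_def cop_def; algebra)
  have e70: "(-(T One G One) * (T N G N) + (T One G G) * (T GN G N) - (T One G N) * (T N G G) + (T G G One) * (T N One N) + (T G G G) * (T N G N) - (T G G N) * (T N G One) + (T G G N) * (T N N N) + (T G G GN) * (T N GN N) - (T N G N) * (T N G GN) - (T N G N) * (T GN G N)) = 0" using E_a[OF assms, where a=N and b=G and c=G and r=N] by (simp add: sumB mult_def bas_def eps_def cop_def; algebra)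
  have e71: "(-(T One G One) * (T N N One) + (T One G G) * (T GN N One) - (T One N One) * (T N G G) + (T G N One) * (T N One One) - (T G N One) * (T N G One) + (T G N G) * (T N G One) + (T G N N) * (T N N One) + (T G N GN) * (T N GN One) - (T N G N) * (T GN N One) - (T N G GN) * (T N N One)) = 0" using E_a[OF assms, where a=N and b=G and c=N and r=One] by (simp add: sumB mult_def bas_def eps_def cop_def; algebra)
  have e72: "(-(T One G One) * (T N N N) + (T One G G) * (T GN N N) - (T One N N) * (T N G G) + (T G N One) * (T N One N) + (T G N G) * (T N G N) - (T G N N) * (T N G One) + (T G N N) * (T N N N) + (T G N GN) * (T N GN N) - (T N G N) * (T GN N N) - (T N G GN) * (T N N N)) = 0" using E_a[OF assms, where a=N and b=G and c=N and r=N] by (simp add: sumB mult_def bas_def eps_def cop_def; algebra)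
  have e73: "(-(T One One One) * (T One N N) - (T One One G) * (T G N N) + (T One One N) * (T One N One) - (T One One N) * (T N N N) - (T One One GN) * (T GN N N) + (T One G N) * (T One N G) + (T One N N) * (T One N N) + (T One N GN) * (T One GN N)) = 0" using E_a[OF assms, where a=One and b=One and c=N and r=N] by (simp add: sumB mult_def bas_def eps_def cop_def; algebra)
  have e74: "((T One One One) * (T N G One) - (T One G One) * (T One N One) + (T One G One) * (T N G G) + (T One N One) * (T N G N) - (T One N G) * (T G G One) - (T One N N) * (T N G One) - (T One N GN) * (T GN G One) + (T One GN One) * (T N G GN)) = 0" using E_a[OF assms, where a=One and b=N and c=G and r=One] by (simp add: sumB mult_def bas_def eps_def cop_def; algebra)
  have e75: "(-(T G One GN) * (T G N One) - (T G G One) * (T G N GN) + (T G N GN)) = 0" using E_cop[OF assms, where a=G and c=N and p=One and q=GN] by (simp add: sumB mult_def bas_def eps_def cop_def; algebra)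
  have e76: "(-(T One G GN) * (T N G One) - (T G G One) * (T N G GN) + (T N G GN)) = 0" using E_cop[OF assms, where a=N and c=G and p=One and q=GN] by (simp add: sumB mult_def bas_def eps_def cop_def; algebra)
  have e77: "(-(T One G One) * (T N N One) - (T One G G) * (T N N G) - (T G N One) * (T N G One) - (T G N G) * (T N G G) - (T N GN One)) = 0" using E_m[OF assms, where a=N and b=N and c=G and r=One] by (simp add: sumB mult_def bas_def eps_def cop_def; algebra)
  have e78: "(-(T One N N) * (T G G G) + (T G One N) * (T G N One) - (T G G One) * (T G N N) + (T G G N) * (T G N G) - (T G G N) * (T GN N N) - (T G G GN) * (T N N N) + (T G N N) * (T G N N) + (T G N GN) * (T G GN N)) = 0" using E_a[OF assms, where a=G and b=G and c=N and r=N] by (simp add: sumB mult_def bas_def eps_def cop_def; algebra)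
  have e79: "(-(T One One One) * (T N N N) + (T One One G) * (T GN N N) + (T One N One) * (T N One N) + (T One N G) * (T N G N) - (T One N N) * (T N One G) + (T One N N) * (T N N N) + (T One N GN) * (T N GN N) - (T G N N) * (T N One One) - (T N One N) * (T GN N N) - (T N One GN) * (T N N N)) = 0" using E_a[OF assms, where a=N and b=One and c=N and r=N] by (simp add: sumB mult_def bas_def eps_def cop_def; algebra)
  have e80: "(-(T One N N) * (T G N G) + (T G One N) * (T N N One) + (T G G N) * (T N N G) - (T G N One) * (T G N N) + (T G N N) * (T N N N) - (T G N N) * (T GN N N) - (T G N GN) * (T N N N) + (T G GN N) * (T N N GN)) = 0" using E_a[OF assms, where a=G and b=N and c=N and r=N] by (simp add: sumB mult_def bas_def eps_def cop_def; algebra)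
  have s0: "(T One N One) = (-(T One N G))" using e0 by algebra
  have s1: "(T One GN One) = (-(T One GN G))" using e1 by algebra
  have s2: "(T G N One) = (-(T G N G))" using e2 by algebra
  have s3: "(T G GN One) = (-(T G GN G))" using e3 by algebra
  have s4: "(T N One One) = (-(T N One G))" using e4 by algebra
  have s5: "(T N G One) = (-(T N G G))" using e5 by algebra
  have s6: "(T N N One) = (-(T N N G))" using e6 by algebra
  have s7: "(T N GN One) = (-(T N GN G))" using e7 by algebra
  have s8: "(T GN One One) = (-(T GN One G))" using e8 by algebra
  have s9: "(T GN G One) = (-(T GN G G))" using e9 by algebra
  have s10: "(T GN N One) = (-(T GN N G))" using e10 by algebra
  have s11: "(T GN GN One) = (-(T GN GN G))" using e11 by algebra
  have s12: "(T One One G) = (2 * (T One G One) * (T One G G))" using e12 by algebra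
  have s13: "(T One One N) = (2 * (T One G One) * (T One G N))" using e13 by algebra
  have s14: "(T One One GN) = (2 * (T One G One) * (T One G GN))" using e14 by algebra
  have s15: "(T G One G) = (2 * (T G G One) * (T G G G))" using e15 by algebra
  have s16: "(T G One N) = (2 * (T G G One) * (T G G N))" using e16 by algebra
  have s17: "(T G One GN) = (2 * (T G G One) * (T G G GN))" using e17 by algebra
  have s18: "(T One One One) = (1 - 2 * (T One G One) * (T One G G))" using e18 s12 by algebra
  have s19: "(T One G One) = (1 - (T One G G))" using e19 by algebra
  have s20: "(T G One One) = (1 - 2 * (T G G One) * (T G G G))" using e20 s15 by algebra
  have s21: "(T G G One) = (1 - (T G G G))" using e21 by algebra
  have s22: "(T One GN G) = (-2 * (T One G G) * (T One N G) + (T One N G))" using e22 s1 s0 s19 by algebra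
  have s23: "(T G GN G) = (-2 * (T G G G) * (T G N G) + (T G N G))" using e23 s3 s2 s21 by algebra
  have s24: "(T N One G) = (-2 * (T One G G) * (T N G G) - 2 * (T G G G) * (T N G G) + 2 * (T N G G))" using e24 s4 s5 s19 s21 by algebra
  have s25: "(T N GN G) = (-2 * (T One N G) * (T N G G) - 2 * (T G G G) * (T N N G) + (T N N G))" using e25 s7 s6 s5 s0 s21 by algebra
  have s26: "(T GN One G) = (-2 * (T One G G) * (T GN G G) - 2 * (T G G G) * (T GN G G) + 2 * (T GN G G))" using e26 s9 s8 s19 s21 by algebra
  have s27: "(T GN GN G) = (-2 * (T One G G) * (T GN N G) - 2 * (T G N G) * (T GN G G) + (T GN N G))" using e27 s11 s9 s2 s19 s10 by algebra
  have s28: "(T One GN N) = (-(T One G G) * (T One N N) + (T One G G) * (T One N GN) - (T One G N) * (T One N G) - (T One G GN) * (T One N G) + (T One N N))" using e28 s0 s19 by algebra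
  have s29: "(T One GN GN) = ((T One G G) * (T One N N) - (T One G G) * (T One N GN) - (T One G N) * (T One N G) - (T One G GN) * (T One N G) + (T One N GN))" using e29 s0 s19 by algebra
  have s30: "(T G GN N) = (-(T G G G) * (T G N N) + (T G G G) * (T G N GN) - (T G G N) * (T G N G) - (T G G GN) * (T G N G) + (T G N N))" using e30 s2 s21 by algebra
  have s31: "(T G GN GN) = ((T G G G) * (T G N N) - (T G G G) * (T G N GN) - (T G G N) * (T G N G) - (T G G GN) * (T G N G) + (T G N GN))" using e31 s2 s21 by algebra
  have s32: "(T N One N) = (-(T One G G) * (T N G N) - (T One G G) * (T N G GN) - (T One G N) * (T N G G) + (T One G GN) * (T N G G) - (T G G G) * (T N G N) + (T G G G) * (T N G GN) - (T G G N) * (T N G G) - (T G G GN) * (T N G G) + 2 * (T N G N))" using e32 s5 s19 s21 by algebra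
  have s33: "(T N One GN) = (-(T One G G) * (T N G N) - (T One G G) * (T N G GN) + (T One G N) * (T N G G) - (T One G GN) * (T N G G) + (T G G G) * (T N G N) - (T G G G) * (T N G GN) - (T G G N) * (T N G G) - (T G G GN) * (T N G G) + 2 * (T N G GN))" using e33 s5 s19 s21 by algebra
  have s34: "(T N GN N) = (-(T One N G) * (T N G N) - (T One N G) * (T N G GN) - (T One N N) * (T N G G) + (T One N GN) * (T N G G) - (T G G G) * (T N N N) + (T G G G) * (T N N GN) - (T G G N) * (T N N G) - (T G G GN) * (T N N G) + (T N N N))" using e34 s6 s0 s5 s21 by algebra
  have s35: "(T N GN GN) = (-(T One N G) * (T N G N) - (T One N G) * (T N G GN) + (T One N N) * (T N G G) - (T One N GN) * (T N G G) + (T G G G) * (T N N N) - (T G G G) * (T N N GN) - (T G G N) * (T N N G) - (T G G GN) * (T N N G) + (T N N GN))" using e35 s6 s0 s5 s21 by algebra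
  have s36: "(T GN One N) = (-(T One G G) * (T GN G N) + (T One G G) * (T GN G GN) - (T One G N) * (T GN G G) - (T One G GN) * (T GN G G) - (T G G G) * (T GN G N) - (T G G G) * (T GN G GN) - (T G G N) * (T GN G G) + (T G G GN) * (T GN G G) + 2 * (T GN G N))" using e36 s9 s19 s21 by algebra
  have s37: "(T GN One GN) = ((T One G G) * (T GN G N) - (T One G G) * (T GN G GN) - (T One G N) * (T GN G G) - (T One G GN) * (T GN G G) - (T G G G) * (T GN G N) - (T G G G) * (T GN G GN) + (T G G N) * (T GN G G) - (T G G GN) * (T GN G G) + 2 * (T GN G GN))" using e37 s9 s19 s21 by algebra
  have s38: "(T GN GN N) = (-(T One G G) * (T GN N N) + (T One G G) * (T GN N GN) - (T One G N) * (T GN N G) - (T One G GN) * (T GN N G) - (T G N G) * (T GN G N) - (T G N G) * (T GN G GN) - (T G N N) * (T GN G G) + (T G N GN) * (T GN G G) + (T GN N N))" using e38 s9 s2 s19 s10 by algebra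
  have s39: "(T GN GN GN) = ((T One G G) * (T GN N N) - (T One G G) * (T GN N GN) - (T One G N) * (T GN N G) - (T One G GN) * (T GN N G) - (T G N G) * (T GN G N) - (T G N G) * (T GN G GN) + (T G N N) * (T GN G G) - (T G N GN) * (T GN G G) + (T GN N GN))" using e39 s9 s2 s19 s10 by algebra
  have "((T One G N))^2 = 0" using e40 by algebra
  hence h0: "(T One G N) = 0" by simp
  have s40: "(T One G N) = 0" using h0 by simp
  have "((T One G GN))^2 = 0" using e41 by algebra
  hence h1: "(T One G GN) = 0" by simp
  have s41: "(T One G GN) = 0" using h1 by simp
  have "((T G G N))^2 = 0" using e42 by algebra
  hence h2: "(T G G N) = 0" by simp
  have s42: "(T G G N) = 0" using h2 by simp
  have "((T G G GN))^2 = 0" using e43 by algebra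
  hence h3: "(T G G GN) = 0" by simp
  have s43: "(T G G GN) = 0" using h3 by simp
  have "((T One N G))^2 = 0" using e44 s0 by algebra
  hence h4: "(T One N G) = 0" by simp
  have s44: "(T One N G) = 0" using h4 by simp
  have "((T G N G))^2 = 0" using e45 s2 by algebra
  hence h5: "(T G N G) = 0" by simp
  have s45: "(T G N G) = 0" using h5 by simp
  have "((T One G G)) * (-1 + (T One G G)) = 0" using e46 s19 by algebra
  hence "(T One G G) = 0 \<or> (T One G G) = (1)" by (simp add: add_eq_0_iff)
  then show ?thesis
  proof (elim disjE)
    assume h6: "(T One G G) = 0"
    have s46: "(T One G G) = 0" using h6 by simp
    have s47: "(T One N N) = 0" using e47 s19 s46 s13 s40 s0 s44 by algebra
    have s48: "(T One N GN) = 0" using e48 s18 s46 s19 s41 s0 s44 by algebra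
    have s49: "(T N G GN) = 0" using e49 s19 s46 s5 s43 by algebra
    have s50: "(T GN G N) = 0" using e50 s42 s19 s46 s9 by algebra
    have s51: "(T GN N N) = ((T G N N) * (T GN G G))" using e51 s10 s16 s42 s21 s36 s46 s40 s50 s41 s43 s9 s0 s44 s19 by algebra
    have s52: "(T N N GN) = (-2 * (T G G G) * (T G N GN) * (T N G G) + 2 * (T G N GN) * (T N G G))" using e52 s6 s4 s24 s46 s49 s18 s19 s0 s44 s43 by algebra
    have "((T G G G)) * (-1 + (T G G G)) = 0" using e53 s21 by algebra
    hence "(T G G G) = 0 \<or> (T G G G) = (1)" by (simp add: add_eq_0_iff)
    then show ?thesis
    proof (elim disjE)
      assume h7: "(T G G G) = 0"
      have s53: "(T G G G) = 0" using h7 by simp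
      have s54: "(T G N N) = 0" using e54 s2 s45 s21 s53 s16 s42 by algebra
      have s55: "(T G N GN) = 0" using e55 s2 s45 s20 s53 s21 s43 by algebra
      have "2 * (T N G G) = 2 * 0" using e56 s4 s24 s46 s53 s18 s19 s20 s21 by algebra
      hence s56: "(T N G G) = 0" by simp
      have "(-2) * (T N G N) = (-2) * 0" using e57 s4 s24 s46 s53 s56 s13 s19 s40 s32 s42 s49 s41 s43 s20 s21 by algebra
      hence s57: "(T N G N) = 0" by simp
      have s58: "(T N N G) = 0" using e58 s6 s4 s24 s46 s53 s56 s18 s19 s5 s0 s44 s2 s45 s21 by algebra
      have s59: "(T N N N) = 0" using e59 s6 s58 s47 s13 s19 s46 s40 s5 s56 s2 s45 s21 s53 s32 s57 s42 s49 s41 s43 by algebra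
      have "2 * (T GN G G) = 2 * 0" using e60 s20 s53 s21 s18 s46 s19 s8 s26 by algebra
      hence s60: "(T GN G G) = 0" by simp
      have "(-2) * (T GN G GN) = (-2) * 0" using e61 s14 s19 s46 s41 s37 s60 s53 s40 s50 s42 s43 s20 s21 s8 s26 by algebra
      hence s61: "(T GN G GN) = 0" by simp
      have s62: "(T GN N G) = 0" using e62 s10 s20 s53 s21 s9 s60 s8 s26 s46 s0 s44 s2 s45 s19 by algebra
      have s63: "(T GN N GN) = 0" using e63 s10 s62 s20 s53 s21 s48 s41 s61 s8 s26 s46 s60 s2 s45 by algebra
      show ?thesis
      proof -
        have "T = form_vi"
        proof (intro ext)
          fix x y z show "T x y z = form_vi x y z"
            by (cases x; cases y; cases z; simp add: s0 s1 s2 s3 s4 s5 s6 s7 s8 s9 s10 s11 s12 s13 s14 s15 s16 s17 s18 s19 s20 s21 s22 s23 s24 s25 s26 s27 s28 s29 s30 s31 s32 s33 s34 s35 s36 s37 s38 s39 s40 s41 s42 s43 s44 s45 s46 s47 s48 s49 s50 s51 s52 s53 s54 s55 s56 s57 s58 s59 s60 s61 s62 s63 bas_def vec_def algebra_simps)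
        qed
        then show ?thesis by blast
      qed
    next
      assume h8: "(T G G G) = (1)"
      have s64: "(T G G G) = (1)" using h8 by simp
      have "((1)::'k) = 0" using e64 s46 s16 s42 s21 s64 s3 s23 s45 s40 s17 s43 s20 s9 s41 s5 s2 s19 s15 by algebra
      then show ?thesis by simp
    qed
  next
    assume h9: "(T One G G) = (1)"
    have s65: "(T One G G) = (1)" using h9 by simp
    have s66: "(T One N GN) = 0" using e65 s14 s19 s65 s41 s0 s44 by algebra
    have s67: "(T N G N) = 0" using e66 s42 s19 s65 s5 by algebra
    have s68: "(T GN G GN) = 0" using e67 s19 s65 s9 s43 by algebra
    have s69: "(T N N GN) = (-2 * (T G G G) * (T G N GN) * (T N G G))" using e52 s6 s4 s24 s65 s18 s19 s0 s44 s43 by algebra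
    have s70: "(T GN N GN) = (-(T G N GN) * (T GN G G))" using e68 s10 s17 s21 s43 s9 s0 s44 s19 s65 s37 s40 s42 s41 s68 by algebra
    have s71: "(T GN G G) = (-2 * (T G G G) * (T G G G) * (T N G G) + (T N G G) + (T N G G) * (T N G GN))" using e69 s7 s25 s44 s6 s4 s24 s65 s67 s42 s9 s43 s5 s19 s21 by algebra
    have s72: "(T GN G N) = ((T G G G) * (T G G G) * (T N G GN) - 2 * (T G G G) * (T N G GN) + (T N G GN))" using e70 s65 s40 s67 s42 s34 s66 s43 s44 s69 s5 s19 s21 s32 s41 by algebra
    have s73: "(T GN N G) = (2 * (T G G G) * (T G N GN) * (T N N G) - (T G N N) * (T N N G) - (T G N GN) * (T N N G) + (T N G GN) * (T N N G))" using e71 s7 s25 s44 s6 s4 s24 s65 s67 s0 s5 s2 s45 s19 s10 by algebra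
    have s74: "(T GN N N) = ((T One N N) * (T G N GN) * (T N G G) + (T One N N) * (T N G G) + 2 * (T G G G) * (T G G G) * (T G N GN) * (T G N GN) * (T N G G) + (T G G G) * (T G N GN) * (T N N N) - (T G N N) * (T N G G) - (T G N N) * (T N N N) - (T G N GN) * (T N N N) + (T N G GN) * (T N N N))" using e72 s65 s67 s34 s42 s66 s43 s44 s69 s5 s2 s45 s19 s32 s40 s41 by algebra
    have "((T G G G)) * (-1 + (T G G G)) = 0" using e53 s21 by algebra
    hence "(T G G G) = 0 \<or> (T G G G) = (1)" by (simp add: add_eq_0_iff)
    then show ?thesis
    proof (elim disjE)
      assume h10: "(T G G G) = 0"
      have s75: "(T G G G) = 0" using h10 by simp
      have s76: "(T G N N) = 0" using e54 s2 s45 s21 s75 s16 s42 by algebra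
      have s77: "(T G N GN) = 0" using e55 s2 s45 s20 s75 s21 s43 by algebra
      have s78: "(T N G GN) = 0" using e57 s4 s24 s65 s75 s13 s19 s40 s32 s67 s42 s41 s43 s20 s21 by algebra
      have s79: "(T N N G) = 0" using e58 s6 s4 s24 s65 s75 s18 s19 s5 s0 s44 s2 s45 s21 by algebra
      have s80: "(T N N N) = ((T One N N) * (T N G G))" using e59 s6 s79 s13 s19 s65 s40 s5 s2 s45 s21 s75 s32 s67 s42 s78 s41 s43 by algebra
      have "((T One N N)) * (-1 + (T One N N)) = 0" using e73 s28 s65 s40 s66 s41 s44 s12 s19 s13 s76 s74 s75 s78 s77 s80 s18 s14 s0 by algebra
      hence "(T One N N) = 0 \<or> (T One N N) = (1)" by (simp add: add_eq_0_iff)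
      then show ?thesis
      proof (elim disjE)
        assume h11: "(T One N N) = 0"
        have s81: "(T One N N) = 0" using h11 by simp
        have s82: "(T N G G) = 0" using e74 s81 s67 s9 s71 s75 s78 s66 s1 s22 s65 s44 s18 s19 s0 s5 s21 by algebra
        show ?thesis
        proof -
          have "T = form_v"
          proof (intro ext)
            fix x y z show "T x y z = form_v x y z"
              by (cases x; cases y; cases z; simp add: s0 s1 s2 s3 s4 s5 s6 s7 s8 s9 s10 s11 s12 s13 s14 s15 s16 s17 s18 s19 s20 s21 s22 s23 s24 s25 s26 s27 s28 s29 s30 s31 s32 s33 s34 s35 s36 s37 s38 s39 s40 s41 s42 s43 s44 s45 s65 s66 s67 s68 s69 s70 s71 s72 s73 s74 s75 s76 s77 s78 s79 s80 s81 s82 bas_def vec_def algebra_simps)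
          qed
          then show ?thesis by blast
        qed
      next
        assume h12: "(T One N N) = (1)"
        have s83: "(T One N N) = (1)" using h12 by simp
        show ?thesis
        proof -
          have "T = form_ii (-(T N G G))"
          proof (intro ext)
            fix x y z show "T x y z = form_ii (-(T N G G)) x y z"
              by (cases x; cases y; cases z; simp add: s0 s1 s2 s3 s4 s5 s6 s7 s8 s9 s10 s11 s12 s13 s14 s15 s16 s17 s18 s19 s20 s21 s22 s23 s24 s25 s26 s27 s28 s29 s30 s31 s32 s33 s34 s35 s36 s37 s38 s39 s40 s41 s42 s43 s44 s45 s65 s66 s67 s68 s69 s70 s71 s72 s73 s74 s75 s76 s77 s78 s79 s80 s83 bas_def vec_def algebra_simps)
          qed
          then show ?thesis by blast
        qed
      qed
    next
      assume h13: "(T G G G) = (1)"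
      have s84: "(T G G G) = (1)" using h13 by simp
      have s85: "(T G N GN) = 0" using e75 s2 s45 s17 s21 s84 s43 by algebra
      have "(-2) * (T N G G) = (-2) * 0" using e56 s4 s24 s65 s84 s18 s19 s20 s21 by algebra
      hence s86: "(T N G G) = 0" by simp
      have s87: "(T N G GN) = 0" using e76 s21 s84 s41 s5 s86 by algebra
      have "(-2) * (T N N G) = (-2) * 0" using e77 s7 s25 s84 s86 s44 s6 s65 s5 s2 s45 s19 by algebra
      hence s88: "(T N N G) = 0" by simp
      have s89: "(T One N N) = ((T G N N) * (T G N N))" using e78 s84 s16 s42 s21 s85 s74 s87 s86 s43 s2 s45 s30 by algebra
      have "(1 + (T G N N)) * ((T G N N))^2 * (-1 + (T G N N)) = 0" using e73 s28 s65 s89 s40 s66 s41 s44 s12 s19 s13 s74 s84 s87 s85 s86 s18 s14 s0 by algebra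
      hence "(T G N N) = (-1) \<or> (T G N N) = 0 \<or> (T G N N) = (1)" by (simp add: add_eq_0_iff)
      then show ?thesis
      proof (elim disjE)
        assume h14: "(T G N N) = (-1)"
        have s90: "(T G N N) = (-1)" using h14 by simp
        show ?thesis
        proof -
          have "T = form_i ((T N N N))"
          proof (intro ext)
            fix x y z show "T x y z = form_i ((T N N N)) x y z"
              by (cases x; cases y; cases z; simp add: s0 s1 s2 s3 s4 s5 s6 s7 s8 s9 s10 s11 s12 s13 s14 s15 s16 s17 s18 s19 s20 s21 s22 s23 s24 s25 s26 s27 s28 s29 s30 s31 s32 s33 s34 s35 s36 s37 s38 s39 s40 s41 s42 s43 s44 s45 s65 s66 s67 s68 s69 s70 s71 s72 s73 s74 s84 s85 s86 s87 s88 s89 s90 bas_def vec_def algebra_simps)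
          qed
          then show ?thesis by blast
        qed
      next
        assume h15: "(T G N N) = 0"
        have s91: "(T G N N) = 0" using h15 by simp
        have s92: "(T N N N) = 0" using e79 s12 s65 s19 s33 s84 s40 s67 s42 s87 s41 s43 s86 s89 s91 s4 s24 s18 s66 s74 s85 s34 s88 s44 s69 s0 s32 by algebra
        show ?thesis
        proof -
          have "T = form_iv"
          proof (intro ext)
            fix x y z show "T x y z = form_iv x y z"
              by (cases x; cases y; cases z; simp add: s0 s1 s2 s3 s4 s5 s6 s7 s8 s9 s10 s11 s12 s13 s14 s15 s16 s17 s18 s19 s20 s21 s22 s23 s24 s25 s26 s27 s28 s29 s30 s31 s32 s33 s34 s35 s36 s37 s38 s39 s40 s41 s42 s43 s44 s45 s65 s66 s67 s68 s69 s70 s71 s72 s73 s74 s84 s85 s86 s87 s88 s89 s91 s92 bas_def vec_def algebra_simps)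
          qed
          then show ?thesis by blast
        qed
      next
        assume h16: "(T G N N) = (1)"
        have s93: "(T G N N) = (1)" using h16 by simp
        have "2 * (T N N N) = 2 * 0" using e80 s6 s88 s16 s42 s21 s84 s89 s93 s85 s74 s87 s86 s2 s45 s30 s43 s69 by algebra
        hence s94: "(T N N N) = 0" by simp
        show ?thesis
        proof -
          have "T = form_iii"
          proof (intro ext)
            fix x y z show "T x y z = form_iii x y z"
              by (cases x; cases y; cases z; simp add: s0 s1 s2 s3 s4 s5 s6 s7 s8 s9 s10 s11 s12 s13 s14 s15 s16 s17 s18 s19 s20 s21 s22 s23 s24 s25 s26 s27 s28 s29 s30 s31 s32 s33 s34 s35 s36 s37 s38 s39 s40 s41 s42 s43 s44 s45 s65 s66 s67 s68 s69 s70 s71 s72 s73 s74 s84 s85 s86 s87 s88 s89 s93 s94 bas_def vec_def algebra_simps)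
          qed
          then show ?thesis by blast
        qed
      qed
    qed
  qed
qed

end
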